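(* Let $G$ be an unweighted undirected graph with maximum degree $\Delta$ and let $\mathcal{T}$ be a set of $k$ terminals. Then $\mathrm{DegCost}^*(\mathcal{T})=\Theta(\sqrt{\Delta}+k)\cdot q^*(\mathcal{T})$; that is, $\mathrm{DegCost}^*(\mathcal{T})\le O(\sqrt{\Delta}+k)\cdot q^*(\mathcal{T})$ for every such instance, and there exist instances with $\mathrm{DegCost}^*(\mathcal{T})=\Omega(\sqrt{\Delta}+k)\cdot q^*(\mathcal{T})$.
   Context: For $u\in V(G)$, $N[u]$ is $u$ together with its neighbors; for a subgraph $G'$, $N[G']=\bigcup_{u\in V(G')}N[u]$ and $\mathrm{Cost}(G')=|N[G']|$. $\mathrm{DegCost}(G')$ is the sum over nodes of $G'$ of their degrees in $G$. A Steiner tree for $\mathcal{T}$ is a tree $T\subseteq G$ with $\mathcal{T}\subseteq V(T)$. $q^*(\mathcal{T})=\min\{\mathrm{Cost}(T)\}$ and $\mathrm{DegCost}^*(\mathcal{T})=\min\{\mathrm{DegCost}(T)\}$, both minima over Steiner trees $T$ for $\mathcal{T}$. *)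

theory Defs
  imports Complex_Main
begin

definition graph :: "'a set \<Rightarrow> 'a set set \<Rightarrow> bool" where
  "graph V E \<longleftrightarrow> finite V \<and> (\<forall>e\<in>E. e \<subseteq> V \<and> card e = 2)"

definition nbrs :: "'a set set \<Rightarrow> 'a \<Rightarrow> 'a set" where
  "nbrs E u = {v. {u, v} \<in> E \<and> v \<noteq> u}"

definition cnbhd :: "'a set set \<Rightarrow> 'a \<Rightarrow> 'a set" where
  "cnbhd E u = insert u (nbrs E u)"

definition deg :: "'a set set \<Rightarrow> 'a \<Rightarrow> nat" where
  "deg E u = card (nbrs E u)"

definition maxdeg :: "'a set \<Rightarrow> 'a set set \<Rightarrow> nat" where
  "maxdeg V E = Max (deg E ` V)"

definition Cost :: "'a set set \<Rightarrow> 'a set \<Rightarrow> nat" where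
  "Cost E VT = card (\<Union>u\<in>VT. cnbhd E u)"

definition DegCost :: "'a set set \<Rightarrow> 'a set \<Rightarrow> nat" where
  "DegCost E VT = (\<Sum>u\<in>VT. deg E u)"

definition is_tree :: "'a set \<Rightarrow> 'a set set \<Rightarrow> bool" where
  "is_tree VT ET \<longleftrightarrow> VT \<noteq> {} \<and> finite VT \<and> (\<forall>e\<in>ET. e \<subseteq> VT \<and> card e = 2)
     \<and> (\<forall>u\<in>VT. \<forall>v\<in>VT. (u, v) \<in> {(x, y). {x, y} \<in> ET}\<^sup>*)
     \<and> card ET = card VT - 1"

definition steiner_tree :: "'a set \<Rightarrow> 'a set set \<Rightarrow> 'a set \<Rightarrow> 'a set \<Rightarrow> 'a set set \<Rightarrow> bool" where
  "steiner_tree V E T VT ET \<longleftrightarrow> VT \<subseteq> V \<and> ET \<subseteq> E \<and> is_tree VT ET \<and> T \<subseteq> VT"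

definition qstar :: "'a set \<Rightarrow> 'a set set \<Rightarrow> 'a set \<Rightarrow> nat" where
  "qstar V E T = Min {Cost E VT | VT ET. steiner_tree V E T VT ET}"

definition DegCoststar :: "'a set \<Rightarrow> 'a set set \<Rightarrow> 'a set \<Rightarrow> nat" where
  "DegCoststar V E T = Min {DegCost E VT | VT ET. steiner_tree V E T VT ET}"

definition st_instance :: "'a set \<Rightarrow> 'a set set \<Rightarrow> 'a set \<Rightarrow> bool" where
  "st_instance V E T \<longleftrightarrow> graph V E \<and> T \<subseteq> V \<and> T \<noteq> {} \<and> (\<exists>VT ET. steiner_tree V E T VT ET)"

end

theory Submission
  imports Defs
begin

definition rel :: "'a set set \<Rightarrow> 'a set \<Rightarrow> ('a \<times> 'a) set" where
  "rel E A = {(x, y). {x, y} \<in> E \<and> x \<in> A \<and> y \<in> A}"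

definition conn :: "'a set set \<Rightarrow> 'a set \<Rightarrow> bool" where
  "conn E A \<longleftrightarrow> (\<forall>u\<in>A. \<forall>v\<in>A. (u, v) \<in> (rel E A)\<^sup>*)"

definition reach :: "'a set set \<Rightarrow> 'a set \<Rightarrow> 'a \<Rightarrow> 'a set" where
  "reach E A w = {v. (w, v) \<in> (rel E A)\<^sup>*}"

lemma rel_sym: "(x, y) \<in> rel E A \<Longrightarrow> (y, x) \<in> rel E A"
  by (auto simp: rel_def insert_commute)

lemma rtr_sym: "(x, y) \<in> (rel E A)\<^sup>* \<Longrightarrow> (y, x) \<in> (rel E A)\<^sup>*"
proof (induction rule: rtrancl_induct)
  case base then show ?case by simp
next
  case (step y z)
  then show ?case by (meson converse_rtrancl_into_rtrancl rel_sym)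
qed

lemma rel_mono: "A \<subseteq> B \<Longrightarrow> rel E A \<subseteq> rel E B"
  by (auto simp: rel_def)

lemma rtr_mono: "A \<subseteq> B \<Longrightarrow> (x, y) \<in> (rel E A)\<^sup>* \<Longrightarrow> (x, y) \<in> (rel E B)\<^sup>*"
  by (meson rel_mono rtrancl_mono subsetD)

lemma rtr_in: "(x, y) \<in> (rel E A)\<^sup>* \<Longrightarrow> y = x \<or> y \<in> A"
  by (induction rule: rtrancl_induct) (auto simp: rel_def)

lemma rtr_closed:
  assumes "(x, y) \<in> (rel E A)\<^sup>*" "x \<in> B" "\<And>u v. (u, v) \<in> rel E A \<Longrightarrow> u \<in> B \<Longrightarrow> v \<in> B"
  shows "y \<in> B"
  using assms by (induction rule: rtrancl_induct) auto

lemma reach_sub: "w \<in> A \<Longrightarrow> reach E A w \<subseteq> A"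
  using rtr_in by (fastforce simp: reach_def)

lemma reach_self: "w \<in> reach E A w"
  by (simp add: reach_def)

lemma reach_path: "(w, u) \<in> (rel E A)\<^sup>* \<Longrightarrow> (w, u) \<in> (rel E (reach E A w))\<^sup>*"
proof (induction rule: rtrancl_induct)
  case base then show ?case by simp
next
  case (step y z)
  then have "(y, z) \<in> rel E (reach E A w)"
    by (auto simp: rel_def reach_def intro: rtrancl_into_rtrancl)
  with step show ?case by (meson rtrancl_into_rtrancl)
qed

lemma reach_conn: "conn E (reach E A w)"
  unfolding conn_def
proof (intro ballI)
  fix u v assume u: "u \<in> reach E A w" and v: "v \<in> reach E A w"
  have "(w, u) \<in> (rel E (reach E A w))\<^sup>*" using u reach_path by (auto simp: reach_def)
  then have "(u, w) \<in> (rel E (reach E A w))\<^sup>*" by (rule rtr_sym)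
  moreover have "(w, v) \<in> (rel E (reach E A w))\<^sup>*" using v reach_path by (auto simp: reach_def)
  ultimately show "(u, v) \<in> (rel E (reach E A w))\<^sup>*" by simp
qed

lemma conn_insert:
  assumes "conn E X" "y \<in> X" "{w, y} \<in> E"
  shows "conn E (insert w X)"
  unfolding conn_def
proof (intro ballI)
  let ?R = "rel E (insert w X)"
  have wy: "(w, y) \<in> ?R" and yw: "(y, w) \<in> ?R" using assms by (auto simp: rel_def insert_commute)
  have old: "(u, v) \<in> ?R\<^sup>*" if "u \<in> X" "v \<in> X" for u v
    using assms(1) that rtr_mono[of X "insert w X" u v E] by (auto simp: conn_def)
  fix u v assume u: "u \<in> insert w X" and v: "v \<in> insert w X"
  show "(u, v) \<in> ?R\<^sup>*"
  proof (cases "u = w")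
    case True
    show ?thesis
    proof (cases "v = w")
      case True with \<open>u = w\<close> show ?thesis by simp
    next
      case False
      then have "v \<in> X" using v by simp
      then have "(y, v) \<in> ?R\<^sup>*" using old assms(2) by simp
      with wy True show ?thesis by (meson converse_rtrancl_into_rtrancl)
    qed
  next
    case False
    then have ux: "u \<in> X" using u by simp
    show ?thesis
    proof (cases "v = w")
      case True
      have "(u, y) \<in> ?R\<^sup>*" using old ux assms(2) by simp
      with yw True show ?thesis by (meson rtrancl_into_rtrancl)
    next
      case False
      then show ?thesis using old ux v by simp
    qed
  qed
qed

lemma steiner_conn:
  assumes "steiner_tree V E T VT ET"
  shows "conn E VT"
proof -
  have sub: "{(x, y). {x, y} \<in> ET} \<subseteq> rel E VT"
    using assms by (auto simp: steiner_tree_def is_tree_def rel_def)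
  show ?thesis using assms unfolding conn_def steiner_tree_def is_tree_def
    using rtrancl_mono[OF sub] by blast
qed

lemma tree_single: "is_tree {b} {}"
  by (simp add: is_tree_def)

lemma tree_extend:
  assumes t: "is_tree B ET" and u: "u \<in> B" and v: "v \<notin> B"
  shows "is_tree (insert v B) (insert {u, v} ET)"
proof -
  have uv: "u \<noteq> v" using u v by auto
  have finB: "finite B" and ne: "B \<noteq> {}" using t by (auto simp: is_tree_def)
  have edges: "\<forall>e\<in>ET. e \<subseteq> B \<and> card e = 2" using t by (simp add: is_tree_def)
  have finET: "finite ET" proof -
    have "ET \<subseteq> Pow B" using edges by auto
    then show ?thesis using finB by (rule finite_subset[OF _ finite_Pow_iff[THEN iffD2]])
  qed
  have notin: "{u, v} \<notin> ET" using edges v by auto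
  have cardET: "card ET = card B - 1" using t by (simp add: is_tree_def)
  let ?R = "{(x, y). {x, y} \<in> ET}"
  let ?R' = "{(x, y). {x, y} \<in> insert {u, v} ET}"
  have RR: "?R \<subseteq> ?R'" by auto
  have old: "(x, y) \<in> ?R'\<^sup>*" if "x \<in> B" "y \<in> B" for x y
  proof -
    have "(x, y) \<in> ?R\<^sup>*" using t that by (simp add: is_tree_def)
    then show ?thesis using rtrancl_mono[OF RR] by blast
  qed
  have e1: "(u, v) \<in> ?R'" and e2: "(v, u) \<in> ?R'" by (auto simp: insert_commute)
  have connp: "\<forall>x\<in>insert v B. \<forall>y\<in>insert v B. (x, y) \<in> ?R'\<^sup>*"
  proof (intro ballI)
    fix x y assume x: "x \<in> insert v B" and y: "y \<in> insert v B"
    show "(x, y) \<in> ?R'\<^sup>*"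
    proof (cases "x = v")
      case True
      show ?thesis
      proof (cases "y = v")
        case True with \<open>x = v\<close> show ?thesis by simp
      next
        case False
        then have "(u, y) \<in> ?R'\<^sup>*" using old u y by simp
        with e2 True show ?thesis by (meson converse_rtrancl_into_rtrancl)
      qed
    next
      case False
      then have xB: "x \<in> B" using x by simp
      show ?thesis
      proof (cases "y = v")
        case True
        have "(x, u) \<in> ?R'\<^sup>*" using old xB u by simp
        with e1 True show ?thesis by (meson rtrancl_into_rtrancl)
      next
        case False
        then show ?thesis using old xB y by simp
      qed
    qed
  qed
  have "card (insert {u, v} ET) = card ET + 1" using finET notin by simp
  moreover have "card (insert v B) = card B + 1" using finB v by simp
  moreover have "card B \<ge> 1" using finB ne by (simp add: Suc_leI card_gt_0_iff)
  ultimately have cards: "card (insert {u, v} ET) = card (insert v B) - 1" using cardET by simp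
  show ?thesis unfolding is_tree_def
  proof (intro conjI)
    show "\<forall>e\<in>insert {u, v} ET. e \<subseteq> insert v B \<and> card e = 2"
      using edges u uv by auto
    show "insert v B \<noteq> {}" by simp
    show "finite (insert v B)" using finB by simp
    show "\<forall>x\<in>insert v B. \<forall>y\<in>insert v B. (x, y) \<in> {(x, y). {x, y} \<in> insert {u, v} ET}\<^sup>*"
      using connp .
    show "card (insert {u, v} ET) = card (insert v B) - 1" using cards .
  qed
qed

lemma tree_grow:
  assumes g: "graph V E" and AV: "A \<subseteq> V" and c: "conn E A"
  shows "B \<subseteq> A \<Longrightarrow> ET \<subseteq> E \<Longrightarrow> is_tree B ET \<Longrightarrow> \<exists>ET'. ET' \<subseteq> E \<and> is_tree A ET'"
proof (induction "card (A - B)" arbitrary: B ET rule: less_induct)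
  case less
  have finA: "finite A" using g AV by (meson finite_subset graph_def)
  show ?case
  proof (cases "B = A")
    case True with less show ?thesis by blast
  next
    case False
    then obtain a where a: "a \<in> A" "a \<notin> B" using less.prems(1) by blast
    obtain b where b: "b \<in> B" using less.prems(3) by (auto simp: is_tree_def)
    have "(b, a) \<in> (rel E A)\<^sup>*" using c a b less.prems(1) by (auto simp: conn_def)
    have "\<exists>u v. (u, v) \<in> rel E A \<and> u \<in> B \<and> v \<notin> B"
    proof (rule ccontr)
      assume "\<not> ?thesis"
      then have "a \<in> B" using rtr_closed[OF \<open>(b, a) \<in> (rel E A)\<^sup>*\<close> b] by blast
      with a show False by simp
    qed
    then obtain u v where uv: "(u, v) \<in> rel E A" "u \<in> B" "v \<notin> B" by blast
    have vA: "v \<in> A" and uvE: "{u, v} \<in> E" using uv by (auto simp: rel_def)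
    have t': "is_tree (insert v B) (insert {u, v} ET)" using tree_extend[OF less.prems(3) uv(2,3)] .
    have "card (A - insert v B) < card (A - B)"
      proof -
        have "A - insert v B = (A - B) - {v}" by auto
        moreover have "v \<in> A - B" using vA uv(3) by simp
        ultimately show ?thesis using finA by (metis card_Diff1_less finite_Diff)
      qed
    moreover have "insert v B \<subseteq> A" using less.prems(1) vA by simp
    moreover have "insert {u, v} ET \<subseteq> E" using less.prems(2) uvE by simp
    ultimately show ?thesis using less.hyps t' by blast
  qed
qed

lemma tree_exists:
  assumes g: "graph V E" and AV: "A \<subseteq> V" and c: "conn E A" and ne: "A \<noteq> {}"
  shows "\<exists>ET. ET \<subseteq> E \<and> is_tree A ET"
proof -
  obtain b where "b \<in> A" using ne by blast
  then have "{b} \<subseteq> A" by simp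
  then show ?thesis using tree_grow[OF g AV c, of "{b}" "{}"] tree_single[of b] by simp
qed

lemma steiner_exists:
  assumes g: "graph V E" and AV: "A \<subseteq> V" and c: "conn E A" and T: "T \<subseteq> A" "T \<noteq> {}"
  shows "\<exists>ET. steiner_tree V E T A ET"
proof -
  obtain ET where "ET \<subseteq> E" "is_tree A ET" using tree_exists[OF g AV c] T by blast
  then show ?thesis using T AV unfolding steiner_tree_def by blast
qed

lemma fin_costs:
  assumes "graph V E"
  shows "finite {f VT | VT ET. steiner_tree V E T VT ET}"
proof -
  have "{f VT | VT ET. steiner_tree V E T VT ET} \<subseteq> f ` Pow V"
    by (auto simp: steiner_tree_def)
  moreover have "finite V" using assms by (simp add: graph_def)
  ultimately show ?thesis by (meson finite_Pow_iff finite_imageI finite_subset)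
qed

lemma qstar_le:
  assumes "graph V E" "steiner_tree V E T VT ET"
  shows "qstar V E T \<le> Cost E VT"
  unfolding qstar_def using fin_costs[OF assms(1), of "Cost E" T] assms(2)
  by (intro Min_le) auto

lemma qstar_attained:
  assumes "graph V E" "steiner_tree V E T VT0 ET0"
  shows "\<exists>VT ET. steiner_tree V E T VT ET \<and> Cost E VT = qstar V E T"
proof -
  have "qstar V E T \<in> {Cost E VT | VT ET. steiner_tree V E T VT ET}"
    unfolding qstar_def using fin_costs[OF assms(1), of "Cost E" T] assms(2)
    by (intro Min_in) auto
  then show ?thesis by auto
qed

lemma dstar_le:
  assumes "graph V E" "steiner_tree V E T VT ET"
  shows "DegCoststar V E T \<le> DegCost E VT"
  unfolding DegCoststar_def using fin_costs[OF assms(1), of "DegCost E" T] assms(2)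
  by (intro Min_le) auto

lemma dstar_ge:
  assumes "graph V E" "steiner_tree V E T VT0 ET0"
    and "\<And>VT ET. steiner_tree V E T VT ET \<Longrightarrow> b \<le> DegCost E VT"
  shows "b \<le> DegCoststar V E T"
  unfolding DegCoststar_def using fin_costs[OF assms(1), of "DegCost E" T] assms(2,3)
  by (subst Min_ge_iff) auto

lemma two_cut:
  assumes "(t, u) \<in> (rel E Z)\<^sup>*" "t \<in> Z - {y1, y2}" "{y1, w} \<in> E" "{y2, w} \<in> E"
    "w \<in> Z - {y1, y2}" "y1 \<in> Z" "y2 \<in> Z" "y1 \<noteq> y2"
  shows "(t, u) \<in> (rel E (Z - {y1, y2}))\<^sup>* \<or> (t, w) \<in> (rel E (Z - {y1}))\<^sup>*
       \<or> (t, w) \<in> (rel E (Z - {y2}))\<^sup>*"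
  using assms(1)
proof (induction rule: rtrancl_induct)
  case base then show ?case by simp
next
  case (step u v)
  let ?Z0 = "Z - {y1, y2}"
  from step.IH show ?case
  proof (elim disjE)
    assume h: "(t, u) \<in> (rel E ?Z0)\<^sup>*"
    have u0: "u \<in> ?Z0" using rtr_in[OF h] assms(2) by auto
    have uvE: "{u, v} \<in> E" and vZ: "v \<in> Z" using step.hyps(2) by (auto simp: rel_def)
    show ?thesis
    proof (cases "v = y1")
      case True
      have "(t, u) \<in> (rel E (Z - {y2}))\<^sup>*" using rtr_mono[OF _ h, of "Z - {y2}"] by blast
      moreover have "(u, y1) \<in> rel E (Z - {y2})" using u0 uvE True assms(6,8) by (auto simp: rel_def)
      moreover have "(y1, w) \<in> rel E (Z - {y2})" using assms(3,5,6,8) by (auto simp: rel_def)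
      ultimately have "(t, w) \<in> (rel E (Z - {y2}))\<^sup>*" by (meson rtrancl_into_rtrancl)
      then show ?thesis by simp
    next
      case False
      show ?thesis
      proof (cases "v = y2")
        case True
        have "(t, u) \<in> (rel E (Z - {y1}))\<^sup>*" using rtr_mono[OF _ h, of "Z - {y1}"] by blast
        moreover have "(u, y2) \<in> rel E (Z - {y1})" using u0 uvE True assms(7,8) by (auto simp: rel_def)
        moreover have "(y2, w) \<in> rel E (Z - {y1})" using assms(4,5,7,8) by (auto simp: rel_def)
        ultimately have "(t, w) \<in> (rel E (Z - {y1}))\<^sup>*" by (meson rtrancl_into_rtrancl)
        then show ?thesis by simp
      next
        case False
        then have "(u, v) \<in> rel E ?Z0" using u0 uvE vZ \<open>v \<noteq> y1\<close> by (auto simp: rel_def)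
        then show ?thesis using h by (meson rtrancl_into_rtrancl)
      qed
    qed
  qed auto
qed

lemma key:
  fixes \<Phi> :: "'a set \<Rightarrow> nat"
  assumes \<Phi>_def: "\<And>A. \<Phi> A = card (A \<inter> S) + r * card (A - S)"
    and finN: "finite N" and r1: "r \<ge> 1"
    and XN: "X \<subseteq> N" and TX: "T \<subseteq> X" and cX: "conn E X"
    and Xmin: "\<And>Z. Z \<subseteq> N \<Longrightarrow> T \<subseteq> Z \<Longrightarrow> conn E Z \<Longrightarrow> \<Phi> X \<le> \<Phi> Z"
    and wN: "w \<in> N"
  shows "card (nbrs E w \<inter> X) \<le> r + 2 * card T"
proof -
  let ?Y = "nbrs E w \<inter> X"
  have finX: "finite X" using finN XN finite_subset by blast
  have finT: "finite T" using finX TX finite_subset by blast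
  have finY: "finite ?Y" using finX by simp
  have add: "\<Phi> B = \<Phi> A + \<Phi> (B - A)" if "finite B" "A \<subseteq> B" for A B
  proof -
    have "card (B \<inter> S) = card (A \<inter> S) + card ((B - A) \<inter> S)"
    proof -
      have "B \<inter> S = (A \<inter> S) \<union> ((B - A) \<inter> S)" using that by auto
      moreover have "(A \<inter> S) \<inter> ((B - A) \<inter> S) = {}" by auto
      moreover have "finite (A \<inter> S)" "finite ((B - A) \<inter> S)" using that finite_subset by auto
      ultimately show ?thesis by (simp add: card_Un_disjoint)
    qed
    moreover have "card (B - S) = card (A - S) + card ((B - A) - S)"
    proof -
      have "B - S = (A - S) \<union> ((B - A) - S)" using that by auto
      moreover have "(A - S) \<inter> ((B - A) - S) = {}" by auto
      moreover have "finite (A - S)" "finite ((B - A) - S)" using that finite_subset by auto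
      ultimately show ?thesis by (simp add: card_Un_disjoint)
    qed
    ultimately show ?thesis unfolding \<Phi>_def by (simp add: algebra_simps)
  qed
  have ge: "card D \<le> \<Phi> D" if "finite D" for D
  proof -
    have "card D = card (D \<inter> S) + card (D - S)"
      using that by (metis card_Int_Diff)
    also have "\<dots> \<le> \<Phi> D" unfolding \<Phi>_def using r1 by simp
    finally show ?thesis .
  qed
  show ?thesis
  proof (cases "?Y = {}")
    case True then show ?thesis by simp
  next
    case False
    then obtain y0 where y0: "y0 \<in> ?Y" by blast
    let ?Z = "insert w X"
    have y0E: "{w, y0} \<in> E" using y0 by (auto simp: nbrs_def)
    have cZ: "conn E ?Z" using conn_insert[OF cX _ y0E] y0 by blast
    have finZ: "finite ?Z" using finX by simp
    have ZN: "?Z \<subseteq> N" using XN wN by simp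
    let ?F = "{Z'. Z' \<subseteq> ?Z \<and> T \<subseteq> Z' \<and> w \<in> Z' \<and> conn E Z'}"
    have finF: "finite ?F"
    proof -
      have "?F \<subseteq> Pow ?Z" by blast
      then show ?thesis using finZ by (meson finite_Pow_iff finite_subset)
    qed
    have ZF: "?Z \<in> ?F" using TX cZ by blast
    define mc where "mc = Min (card ` ?F)"
    have "mc \<in> card ` ?F" unfolding mc_def using finF ZF by (intro Min_in) auto
    then obtain Z' where Z'F: "Z' \<in> ?F" and Z'c: "card Z' = mc" by blast
    have Z'min: "card Z' \<le> card Z''" if "Z'' \<in> ?F" for Z''
      unfolding Z'c mc_def using finF that by (intro Min_le) auto
    have Z'Z: "Z' \<subseteq> ?Z" and TZ': "T \<subseteq> Z'" and wZ': "w \<in> Z'" and cZ': "conn E Z'" using Z'F by auto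
    have finZ': "finite Z'" using finZ Z'Z finite_subset by blast
    have "\<Phi> X \<le> \<Phi> Z'" using Xmin[of Z'] Z'Z ZN TZ' cZ' by blast
    \<comment> \<open>each cut vertex gets a terminal\<close>
    let ?W = "?Y \<inter> Z' - T"
    have ex: "\<exists>t. t \<in> T \<and> t \<notin> reach E (Z' - {y}) w" if y: "y \<in> ?W" for y
    proof (rule ccontr)
      assume "\<not> ?thesis"
      then have TR: "T \<subseteq> reach E (Z' - {y}) w" by blast
      have wy: "w \<noteq> y" using y by (auto simp: nbrs_def)
      have Rsub: "reach E (Z' - {y}) w \<subseteq> Z' - {y}" using reach_sub[of w "Z' - {y}" E] wZ' wy by blast
      have "reach E (Z' - {y}) w \<in> ?F"
        using Rsub TR reach_self[of w E "Z' - {y}"] reach_conn[of E "Z' - {y}" w] Z'Z by blast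
      then have "card Z' \<le> card (reach E (Z' - {y}) w)" by (rule Z'min)
      moreover have "card (reach E (Z' - {y}) w) < card Z'"
      proof -
        have yZ: "y \<in> Z'" using y by blast
        have "card (reach E (Z' - {y}) w) \<le> card (Z' - {y})" using Rsub finZ' by (intro card_mono) auto
        also have "\<dots> < card Z'" using card_Diff1_less[OF finZ' yZ] .
        finally show ?thesis .
      qed
      ultimately show False by simp
    qed
    define f where "f y = (SOME t. t \<in> T \<and> t \<notin> reach E (Z' - {y}) w)" for y
    have fprop: "f y \<in> T \<and> f y \<notin> reach E (Z' - {y}) w" if "y \<in> ?W" for y
      unfolding f_def using someI_ex[OF ex[OF that]] .
    have inj: "inj_on f ?W"
    proof (rule inj_onI, rule ccontr)
      fix y1 y2 assume y1: "y1 \<in> ?W" and y2: "y2 \<in> ?W" and eq: "f y1 = f y2" and ne: "y1 \<noteq> y2"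
      define t where "t = f y1"
      have tT: "t \<in> T" and t1: "t \<notin> reach E (Z' - {y1}) w" using fprop[OF y1] by (auto simp: t_def)
      have t2: "t \<notin> reach E (Z' - {y2}) w" using fprop[OF y2] eq by (simp add: t_def)
      have tZ: "t \<in> Z' - {y1, y2}" using tT TZ' y1 y2 by auto
      have wZ: "w \<in> Z' - {y1, y2}" using wZ' y1 y2 by (auto simp: nbrs_def)
      have e1: "{y1, w} \<in> E" and e2: "{y2, w} \<in> E" using y1 y2 by (auto simp: nbrs_def insert_commute)
      have "(t, w) \<in> (rel E Z')\<^sup>*" using cZ' tZ wZ' by (auto simp: conn_def)
      have yy: "y1 \<in> Z'" "y2 \<in> Z'" using y1 y2 by auto
      have D: "(t, w) \<in> (rel E (Z' - {y1, y2}))\<^sup>* \<or> (t, w) \<in> (rel E (Z' - {y1}))\<^sup>*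
       \<or> (t, w) \<in> (rel E (Z' - {y2}))\<^sup>*" by (rule two_cut[OF \<open>(t, w) \<in> (rel E Z')\<^sup>*\<close> tZ e1 e2 wZ yy ne])
      have "(t, w) \<in> (rel E (Z' - {y1}))\<^sup>* \<or> (t, w) \<in> (rel E (Z' - {y2}))\<^sup>*"
      proof -
        have "(t, w) \<in> (rel E (Z' - {y1, y2}))\<^sup>* \<Longrightarrow> (t, w) \<in> (rel E (Z' - {y1}))\<^sup>*"
          by (rule rtr_mono[rotated]) auto
        with D show ?thesis by blast
      qed
      then have "(w, t) \<in> (rel E (Z' - {y1}))\<^sup>* \<or> (w, t) \<in> (rel E (Z' - {y2}))\<^sup>*"
        using rtr_sym by metis
      then have "t \<in> reach E (Z' - {y1}) w \<or> t \<in> reach E (Z' - {y2}) w"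
        unfolding reach_def by simp
      with t1 t2 show False by blast
    qed
    have cW: "card ?W \<le> card T"
    proof (rule card_inj_on_le[OF inj _ finT])
      show "f ` ?W \<subseteq> T" using fprop by blast
    qed
    have cYT: "card (?Y \<inter> T) \<le> card T" using finT by (simp add: card_mono)
    have "?Y \<subseteq> ?W \<union> (?Y \<inter> T) \<union> (?Y - Z')" by blast
    then have "card ?Y \<le> card (?W \<union> (?Y \<inter> T) \<union> (?Y - Z'))"
      using finY by (intro card_mono) auto
    also have "\<dots> \<le> card (?W \<union> (?Y \<inter> T)) + card (?Y - Z')"
      by (rule card_Un_le)
    also have "\<dots> \<le> card ?W + card (?Y \<inter> T) + card (?Y - Z')"
      using card_Un_le[of ?W "?Y \<inter> T"] by simp
    finally have cY: "card ?Y \<le> 2 * card T + card (?Y - Z')" using cW cYT by linarith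
    have "\<Phi> ?Z = \<Phi> Z' + \<Phi> (?Z - Z')" using add[OF finZ Z'Z] .
    moreover have "card (?Y - Z') \<le> card (?Z - Z')"
    proof (rule card_mono)
      show "finite (?Z - Z')" using finZ by simp
      show "?Y - Z' \<subseteq> ?Z - Z'" by auto
    qed
    moreover have "card (?Z - Z') \<le> \<Phi> (?Z - Z')" using finZ by (intro ge) simp
    moreover have "\<Phi> ?Z \<le> \<Phi> X + r"
    proof -
      have "X \<subseteq> ?Z" by auto
      then have "\<Phi> ?Z = \<Phi> X + \<Phi> (?Z - X)" by (rule add[OF finZ])
      moreover have "\<Phi> (?Z - X) \<le> r"
      proof (cases "w \<in> X")
        case True then have "?Z - X = {}" by auto
        then show ?thesis unfolding \<Phi>_def by simp
      next
        case False then have "?Z - X = {w}" by auto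
        moreover have "card ({w} \<inter> S) + r * card ({w} - S) \<le> r"
        proof (cases "w \<in> S")
          case True
          then have "{w} - S = {}" "{w} \<inter> S = {w}" by auto
          then show ?thesis using r1 by simp
        next
          case False
          then have "{w} - S = {w}" "{w} \<inter> S = {}" by auto
          then show ?thesis by simp
        qed
        ultimately show ?thesis unfolding \<Phi>_def by simp
      qed
      ultimately show ?thesis by simp
    qed
    ultimately have "card (?Y - Z') \<le> r" using \<open>\<Phi> X \<le> \<Phi> Z'\<close> by linarith
    with cY show ?thesis by linarith
  qed
qed


lemma nbrs_V: "graph V E \<Longrightarrow> nbrs E u \<subseteq> V"
  by (auto simp: graph_def nbrs_def)

lemma nbrs_sym: "v \<in> nbrs E u \<longleftrightarrow> u \<in> nbrs E v"
  by (auto simp: nbrs_def insert_commute)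

lemma dc:
  assumes "finite A" "finite N" "\<And>x. x \<in> A \<Longrightarrow> nbrs E x \<subseteq> N"
  shows "(\<Sum>x\<in>A. card (nbrs E x)) = (\<Sum>w\<in>N. card (nbrs E w \<inter> A))"
proof -
  have "(\<Sum>x\<in>A. card (nbrs E x)) = (\<Sum>x\<in>A. \<Sum>w\<in>N. if w \<in> nbrs E x then 1 else 0)"
  proof (rule sum.cong[OF refl])
    fix x assume x: "x \<in> A"
    have "(\<Sum>w\<in>N. if w \<in> nbrs E x then 1 else (0::nat)) = card {w\<in>N. w \<in> nbrs E x}"
      using assms(2) by (simp only: card_eq_sum sum.inter_filter)
    also have "{w\<in>N. w \<in> nbrs E x} = nbrs E x" using assms(3)[OF x] by auto
    finally show "card (nbrs E x) = (\<Sum>w\<in>N. if w \<in> nbrs E x then 1 else 0)" by simp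
  qed
  also have "\<dots> = (\<Sum>w\<in>N. \<Sum>x\<in>A. if w \<in> nbrs E x then 1 else 0)" by (rule sum.swap)
  also have "\<dots> = (\<Sum>w\<in>N. card (nbrs E w \<inter> A))"
  proof (rule sum.cong[OF refl])
    fix w assume "w \<in> N"
    have "(\<Sum>x\<in>A. if w \<in> nbrs E x then 1 else (0::nat)) = card {x\<in>A. w \<in> nbrs E x}"
      using assms(1) by (simp only: card_eq_sum sum.inter_filter)
    also have "{x\<in>A. w \<in> nbrs E x} = nbrs E w \<inter> A"
    proof (rule set_eqI)
      fix x
      have "w \<in> nbrs E x \<longleftrightarrow> x \<in> nbrs E w" by (rule nbrs_sym)
      then show "x \<in> {x\<in>A. w \<in> nbrs E x} \<longleftrightarrow> x \<in> nbrs E w \<inter> A" by blast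
    qed
    finally show "(\<Sum>x\<in>A. if w \<in> nbrs E x then 1 else 0) = card (nbrs E w \<inter> A)" .
  qed
  finally show ?thesis .
qed

lemma upper:
  assumes inst: "st_instance V E T"
  shows "real (DegCoststar V E T) \<le> 4 * (sqrt (real (maxdeg V E)) + real (card T)) * real (qstar V E T)"
proof -
  have g: "graph V E" and TV: "T \<subseteq> V" and Tne: "T \<noteq> {}" and ex: "\<exists>VT ET. steiner_tree V E T VT ET"
    using inst by (auto simp: st_instance_def)
  have finV: "finite V" using g by (simp add: graph_def)
  obtain S ET0 where st: "steiner_tree V E T S ET0" and cS: "Cost E S = qstar V E T"
    using ex qstar_attained[OF g] by blast
  have SV: "S \<subseteq> V" and TS: "T \<subseteq> S" using st by (auto simp: steiner_tree_def)
  define N where "N = (\<Union>u\<in>S. cnbhd E u)"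
  have NV: "N \<subseteq> V" unfolding N_def cnbhd_def using SV nbrs_V[OF g] by blast
  have finN: "finite N" using NV finV finite_subset by blast
  have SN: "S \<subseteq> N" unfolding N_def cnbhd_def by blast
  have nbN: "nbrs E x \<subseteq> N" if "x \<in> S" for x unfolding N_def cnbhd_def using that by blast
  define q where "q = card N"
  have qq: "q = qstar V E T" using cS by (simp add: Cost_def N_def q_def)
  define \<Delta> where "\<Delta> = maxdeg V E"
  have degle: "deg E x \<le> \<Delta>" if "x \<in> V" for x
    unfolding \<Delta>_def maxdeg_def using finV that by (intro Max_ge) auto
  define k where "k = card T"
  have k1: "k \<ge> 1" unfolding k_def
  proof -
    have "finite T" using TV finV finite_subset by blast
    then show "1 \<le> card T" using Tne by (simp add: Suc_leI card_gt_0_iff)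
  qed
  define r :: nat where "r = nat \<lceil>sqrt (real \<Delta>)\<rceil> + 1"
  have r1: "r \<ge> 1" unfolding r_def by simp
  have rge: "sqrt (real \<Delta>) \<le> real r" unfolding r_def by linarith
  have rle: "real r \<le> sqrt (real \<Delta>) + 2"
  proof -
    have c0: "0 \<le> \<lceil>sqrt (real \<Delta>)\<rceil>" by (simp add: order.strict_trans2[of _ 0])
    have "real (nat \<lceil>sqrt (real \<Delta>)\<rceil>) = real_of_int \<lceil>sqrt (real \<Delta>)\<rceil>"
      using c0 by (rule of_nat_nat)
    also have "\<dots> \<le> sqrt (real \<Delta>) + 1"
    proof -
      have "real_of_int \<lceil>sqrt (real \<Delta>)\<rceil> - 1 < sqrt (real \<Delta>)" by (rule conjunct1[OF ceiling_correct])
      then show ?thesis by linarith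
    qed
    finally have "real (nat \<lceil>sqrt (real \<Delta>)\<rceil>) \<le> sqrt (real \<Delta>) + 1" .
    moreover have "real r = real (nat \<lceil>sqrt (real \<Delta>)\<rceil>) + 1" unfolding r_def by (simp only: of_nat_add of_nat_1)
    ultimately show ?thesis by linarith
  qed
  define \<Phi> where "\<Phi> A = card (A \<inter> S) + r * card (A - S)" for A
  let ?X = "{X. X \<subseteq> N \<and> T \<subseteq> X \<and> conn E X}"
  have finX: "finite ?X"
  proof -
    have "?X \<subseteq> Pow N" by blast
    then show ?thesis using finN by (meson finite_Pow_iff finite_subset)
  qed
  have SX: "S \<in> ?X" using SN TS steiner_conn[OF st] by blast
  define m where "m = Min (\<Phi> ` ?X)"
  have "m \<in> \<Phi> ` ?X" unfolding m_def using finX SX by (intro Min_in) auto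
  then obtain X where XX: "X \<in> ?X" and Xm: "\<Phi> X = m" by blast
  have Xmin: "\<Phi> X \<le> \<Phi> Z" if "Z \<subseteq> N" "T \<subseteq> Z" "conn E Z" for Z
    unfolding Xm m_def using finX that by (intro Min_le) auto
  have XN: "X \<subseteq> N" and TX: "T \<subseteq> X" and cX: "conn E X" using XX by auto
  have finXs: "finite X" using XN finN finite_subset by blast
  have PhiS: "\<Phi> S = card S" unfolding \<Phi>_def by simp
  have cSN: "card S \<le> q" unfolding q_def using SN finN by (rule card_mono[rotated])
  have PhiX: "\<Phi> X \<le> q" using Xmin[OF SN TS steiner_conn[OF st]] PhiS cSN by simp
  have keyb: "card (nbrs E w \<inter> X) \<le> r + 2 * k" if "w \<in> N" for w
    unfolding k_def by (rule key[OF \<Phi>_def finN r1 XN TX cX Xmin that])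
  have split: "DegCost E X = (\<Sum>x\<in>X \<inter> S. deg E x) + (\<Sum>x\<in>X - S. deg E x)"
    unfolding DegCost_def using finXs by (rule sum.Int_Diff)
  have part1: "(\<Sum>x\<in>X \<inter> S. deg E x) \<le> q * (r + 2 * k)"
  proof -
    have "(\<Sum>x\<in>X \<inter> S. deg E x) = (\<Sum>w\<in>N. card (nbrs E w \<inter> (X \<inter> S)))"
      unfolding deg_def using finXs nbN finN by (intro dc) auto
    also have "\<dots> \<le> (\<Sum>w\<in>N. card (nbrs E w \<inter> X))"
      using finXs by (intro sum_mono card_mono) auto
    also have "\<dots> \<le> (\<Sum>w\<in>N. r + 2 * k)" using keyb by (intro sum_mono) auto
    also have "\<dots> = q * (r + 2 * k)" unfolding q_def by simp
    finally show ?thesis .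
  qed
  have part2: "(\<Sum>x\<in>X - S. deg E x) \<le> card (X - S) * \<Delta>"
  proof -
    have "(\<Sum>x\<in>X - S. deg E x) \<le> (\<Sum>x\<in>X - S. \<Delta>)" using XN NV degle by (intro sum_mono) auto
    then show ?thesis by simp
  qed
  have rc: "r * card (X - S) \<le> q" using PhiX unfolding \<Phi>_def by simp
  have XV: "X \<subseteq> V" using XN NV by simp
  obtain ETX where stX: "steiner_tree V E T X ETX" using steiner_exists[OF g XV cX TX Tne] by blast
  have D: "DegCoststar V E T \<le> DegCost E X" by (rule dstar_le[OF g stX])
  define c where "c = card (X - S)"
  define sd where "sd = sqrt (real \<Delta>)"
  have sd0: "sd \<ge> 0" unfolding sd_def by simp
  have sdsq: "sd * sd = real \<Delta>" unfolding sd_def by simp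
  have rcR: "real r * real c \<le> real q" using rc unfolding c_def by (metis of_nat_le_iff of_nat_mult)
  have "real \<Delta> * real c \<le> sd * real r * real c"
  proof -
    have "real \<Delta> \<le> sd * real r" using sdsq rge sd0 unfolding sd_def[symmetric]
      by (metis mult_left_mono)
    then show ?thesis by (simp add: mult_right_mono)
  qed
  also have "\<dots> \<le> sd * real q" using rcR sd0 by (simp add: mult.assoc mult_left_mono)
  finally have p2: "real \<Delta> * real c \<le> sd * real q" .
  have p1: "real q * (real r + 2 * real k) \<le> real q * (sd + 2 + 2 * real k)"
    using rle unfolding sd_def[symmetric] by (simp add: mult_left_mono)
  have "real (DegCoststar V E T) \<le> real (DegCost E X)" using D by simp
  also have "\<dots> \<le> real (q * (r + 2 * k)) + real (c * \<Delta>)"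
    using split part1 part2 unfolding c_def by linarith
  also have "\<dots> = real q * (real r + 2 * real k) + real \<Delta> * real c" by simp
  also have "\<dots> \<le> real q * (sd + 2 + 2 * real k) + sd * real q" using p1 p2 by linarith
  also have "\<dots> \<le> 4 * (sd + real k) * real q"
  proof -
    have "real q * (sd + 2 + 2 * real k) + sd * real q = real q * (2 * sd + 2 + 2 * real k)"
      by (simp add: algebra_simps)
    also have "\<dots> \<le> real q * (4 * (sd + real k))"
      using k1 sd0 by (intro mult_left_mono) auto
    finally show ?thesis by (simp add: algebra_simps)
  qed
  finally show ?thesis unfolding sd_def \<Delta>_def k_def qq .
qed


section \<open>Complete graph instance\<close>

definition EK :: "nat \<Rightarrow> nat set set" where
  "EK n = {{i, j} | i j. i < n \<and> j < n \<and> i \<noteq> j}"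

lemma EK_iff: "{u, v} \<in> EK n \<longleftrightarrow> u < n \<and> v < n \<and> u \<noteq> v"
  unfolding EK_def by (auto simp: doubleton_eq_iff)

lemma EK_graph: "graph {0..<n} (EK n)"
  unfolding graph_def EK_def by auto

lemma EK_nbrs: "u < n \<Longrightarrow> nbrs (EK n) u = {0..<n} - {u}"
  unfolding nbrs_def using EK_iff by auto

lemma EK_conn: "conn (EK n) {0..<n}"
  unfolding conn_def
proof (intro ballI)
  fix u v assume u: "u \<in> {0..<n}" and v: "v \<in> {0..<n}"
  show "(u, v) \<in> (rel (EK n) {0..<n})\<^sup>*"
  proof (cases "u = v")
    case True then show ?thesis by simp
  next
    case False
    then have "(u, v) \<in> rel (EK n) {0..<n}" using u v EK_iff by (auto simp: rel_def)
    then show ?thesis by simp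
  qed
qed

lemma instK:
  assumes n2: "n \<ge> 2"
  shows "st_instance {0..<n} (EK n) {0..<n} \<and> card {0..<n} \<ge> n \<and>
     real (DegCoststar {0..<n} (EK n) {0..<n})
       \<ge> 1/8 * (sqrt (real (maxdeg {0..<n} (EK n))) + real (card {0..<n})) * real (qstar {0..<n} (EK n) {0..<n})"
proof -
  let ?V = "{0..<n::nat}" and ?E = "EK n"
  have g: "graph ?V ?E" by (rule EK_graph)
  have ne: "?V \<noteq> {}" using n2 by auto
  obtain ET where st: "steiner_tree ?V ?E ?V ?V ET"
    using steiner_exists[OF g order_refl EK_conn order_refl ne] by blast
  have inst: "st_instance ?V ?E ?V" unfolding st_instance_def using g ne st by blast
  have deg: "deg ?E u = n - 1" if "u \<in> ?V" for u
    using that by (simp add: deg_def EK_nbrs)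
  have md: "maxdeg ?V ?E = n - 1"
  proof -
    have "deg ?E ` ?V = {n - 1}" using deg ne by auto
    then show ?thesis by (simp add: maxdeg_def)
  qed
  have q: "qstar ?V ?E ?V \<le> n"
  proof -
    have "Cost ?E ?V = card (\<Union>u\<in>?V. cnbhd ?E u)" by (simp add: Cost_def)
    also have "(\<Union>u\<in>?V. cnbhd ?E u) = ?V"
      using ne by (auto simp: cnbhd_def EK_nbrs)
    finally have "Cost ?E ?V = n" by simp
    then show ?thesis using qstar_le[OF g st] by simp
  qed
  have d: "n * (n - 1) \<le> DegCoststar ?V ?E ?V"
  proof (rule dstar_ge[OF g st])
    fix VT ET' assume st': "steiner_tree ?V ?E ?V VT ET'"
    then have "VT = ?V" by (auto simp: steiner_tree_def)
    then have "DegCost ?E VT = (\<Sum>u\<in>?V. n - 1)" unfolding DegCost_def using deg by simp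
    then show "n * (n - 1) \<le> DegCost ?E VT" by simp
  qed
  have sq: "sqrt (real (n - 1)) \<le> real n"
  proof -
    have "n - 1 \<le> n * n" by (metis diff_le_self dual_order.trans le_square)
    then have "real (n - 1) \<le> real n * real n" by (metis of_nat_le_iff of_nat_mult)
    then have "sqrt (real (n - 1)) \<le> sqrt (real n * real n)" by (rule real_sqrt_le_mono)
    also have "\<dots> = real n" by simp
    finally show ?thesis .
  qed
  have "1/8 * (sqrt (real (maxdeg ?V ?E)) + real (card ?V)) * real (qstar ?V ?E ?V)
      \<le> 1/8 * (2 * real n) * real n"
  proof (rule mult_mono)
    show "1/8 * (sqrt (real (maxdeg ?V ?E)) + real (card ?V)) \<le> 1/8 * (2 * real n)"
      using sq md by simp
    show "real (qstar ?V ?E ?V) \<le> real n" using q by simp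
  qed auto
  also have "\<dots> \<le> real (n * (n - 1))"
  proof -
    have eq: "real (n * (n - 1)) = real n * (real n - 1)" using n2 by (simp add: of_nat_diff)
    have ineq: "1/8 * (2 * real n) * real n \<le> real n * (real n - 1)"
    proof -
      have "1/4 * real n \<le> real n - 1" using n2 by simp
      then have "real n * (1/4 * real n) \<le> real n * (real n - 1)" by (intro mult_left_mono) auto
      then show ?thesis by (simp add: algebra_simps)
    qed
    show ?thesis unfolding eq by (rule ineq)
  qed
  also have "\<dots> \<le> real (DegCoststar ?V ?E ?V)" using d by (simp only: of_nat_le_iff)
  finally show ?thesis using inst by simp
qed

section \<open>Path-with-hub instance\<close>

definition EP :: "nat \<Rightarrow> nat set set" where
  "EP m = {{i, Suc i} | i. Suc i < m} \<union> {{a, h} | a h. a < m \<and> m \<le> h \<and> h < 2 * m}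
     \<union> {{h, l} | h l. m \<le> h \<and> h < 2 * m \<and> 2 * m \<le> l \<and> l < 2 * m + m * m}"

definition PP :: "nat \<Rightarrow> nat \<Rightarrow> nat \<Rightarrow> bool" where
  "PP m u v \<longleftrightarrow> (v = Suc u \<and> Suc u < m) \<or> (u < m \<and> m \<le> v \<and> v < 2 * m)
     \<or> (m \<le> u \<and> u < 2 * m \<and> 2 * m \<le> v \<and> v < 2 * m + m * m)"

lemma EP_iff: "{u, v} \<in> EP m \<longleftrightarrow> PP m u v \<or> PP m v u"
proof
  assume "{u, v} \<in> EP m"
  then show "PP m u v \<or> PP m v u"
    unfolding EP_def PP_def by (auto simp: doubleton_eq_iff)
next
  assume "PP m u v \<or> PP m v u"
  then show "{u, v} \<in> EP m"
    unfolding EP_def PP_def by (auto simp: insert_commute)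
qed

lemma EP_elem: "e \<in> EP m \<Longrightarrow> \<exists>u v. e = {u, v} \<and> PP m u v"
  unfolding EP_def PP_def by auto

lemma EP_graph: "graph {0..<2 * m + m * m} (EP m)"
  unfolding graph_def
proof (intro conjI)
  show "\<forall>e\<in>EP m. e \<subseteq> {0..<2 * m + m * m} \<and> card e = 2"
  proof
    fix e assume "e \<in> EP m"
    then obtain u v where e: "e = {u, v}" and p: "PP m u v" using EP_elem by blast
    have "u \<noteq> v" "u < 2 * m + m * m" "v < 2 * m + m * m" using p unfolding PP_def by auto
    then show "e \<subseteq> {0..<2 * m + m * m} \<and> card e = 2" using e by auto
  qed
qed simp

lemma EP_nbrs_notH:
  assumes "\<not> (m \<le> u \<and> u < 2 * m)"
  shows "nbrs (EP m) u \<subseteq> {0..<2 * m}"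
proof
  fix v assume "v \<in> nbrs (EP m) u"
  then have "PP m u v \<or> PP m v u" using EP_iff by (auto simp: nbrs_def)
  then show "v \<in> {0..<2 * m}" using assms unfolding PP_def by auto
qed

lemma EP_nbrs_H:
  assumes "m \<le> u" "u < 2 * m"
  shows "nbrs (EP m) u \<subseteq> {0..<m} \<union> {2 * m..<2 * m + m * m}"
proof
  fix v assume "v \<in> nbrs (EP m) u"
  then have "PP m u v \<or> PP m v u" using EP_iff by (auto simp: nbrs_def)
  then show "v \<in> {0..<m} \<union> {2 * m..<2 * m + m * m}" using assms unfolding PP_def by auto
qed

lemma EP_deg_le:
  assumes "m \<ge> 1"
  shows "deg (EP m) u \<le> m * m + m"
proof (cases "m \<le> u \<and> u < 2 * m")
  case True
  have "deg (EP m) u \<le> card ({0..<m} \<union> {2 * m..<2 * m + m * m})"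
    unfolding deg_def using EP_nbrs_H[of m u] True by (intro card_mono) auto
  also have "\<dots> = m + m * m" by (subst card_Un_disjoint) auto
  finally show ?thesis by simp
next
  case False
  have "deg (EP m) u \<le> card {0..<2 * m}"
    unfolding deg_def using EP_nbrs_notH[OF False] by (intro card_mono) auto
  also have "\<dots> \<le> m * m + m" using assms by simp
  finally show ?thesis .
qed

lemma EP_deg_H:
  assumes "m \<le> h" "h < 2 * m"
  shows "m * m \<le> deg (EP m) h"
proof -
  have "{2 * m..<2 * m + m * m} \<subseteq> nbrs (EP m) h"
  proof
    fix l assume "l \<in> {2 * m..<2 * m + m * m}"
    then have "PP m h l" "l \<noteq> h" using assms unfolding PP_def by auto
    then show "l \<in> nbrs (EP m) h" using EP_iff by (auto simp: nbrs_def)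
  qed
  moreover have "finite (nbrs (EP m) h)"
    using EP_nbrs_H[OF assms] by (rule finite_subset) auto
  ultimately have "card {2 * m..<2 * m + m * m} \<le> deg (EP m) h" unfolding deg_def by (rule card_mono[rotated])
  then show ?thesis by simp
qed

lemma EP_deg_A:
  assumes "a < m"
  shows "m \<le> deg (EP m) a"
proof -
  have "{m..<2 * m} \<subseteq> nbrs (EP m) a"
  proof
    fix h assume "h \<in> {m..<2 * m}"
    then have "PP m a h" "h \<noteq> a" using assms unfolding PP_def by auto
    then show "h \<in> nbrs (EP m) a" using EP_iff by (auto simp: nbrs_def)
  qed
  moreover have "finite (nbrs (EP m) a)"
  proof -
    have "\<not> (m \<le> a \<and> a < 2 * m)" using assms by simp
    then show ?thesis using EP_nbrs_notH[of m a] finite_subset by blast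
  qed
  ultimately have "card {m..<2 * m} \<le> deg (EP m) a" unfolding deg_def by (rule card_mono[rotated])
  then show ?thesis by simp
qed

lemma EP_conn: "conn (EP m) {0..<m}"
proof -
  let ?R = "rel (EP m) {0..<m}"
  have p: "(0, i) \<in> ?R\<^sup>*" if "i < m" for i
    using that
  proof (induction i)
    case 0 then show ?case by simp
  next
    case (Suc i)
    have "(i, Suc i) \<in> ?R" using Suc.prems EP_iff[of i "Suc i" m] unfolding rel_def PP_def by auto
    with Suc show ?case by (meson Suc_lessD rtrancl_into_rtrancl)
  qed
  show ?thesis unfolding conn_def
  proof (intro ballI)
    fix u v assume "u \<in> {0..<m}" "v \<in> {0..<m}"
    then have "u < m" "v < m" by auto
    have "(u, 0) \<in> ?R\<^sup>*" by (rule rtr_sym[OF p[OF \<open>u < m\<close>]])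
    moreover have "(0, v) \<in> ?R\<^sup>*" by (rule p[OF \<open>v < m\<close>])
    ultimately show "(u, v) \<in> ?R\<^sup>*" by (rule rtrancl_trans)
  qed
qed

lemma instP:
  assumes m2: "m \<ge> 2"
  shows "st_instance {0..<2 * m + m * m} (EP m) {0, m - 1} \<and> card {0, m - 1} \<le> 2
     \<and> maxdeg {0..<2 * m + m * m} (EP m) \<ge> m * m \<and>
     real (DegCoststar {0..<2 * m + m * m} (EP m) {0, m - 1})
       \<ge> 1/8 * (sqrt (real (maxdeg {0..<2 * m + m * m} (EP m))) + real (card {0, m - 1::nat}))
           * real (qstar {0..<2 * m + m * m} (EP m) {0, m - 1})"
proof -
  let ?V = "{0..<2 * m + m * m}" and ?E = "EP m" and ?T = "{0, m - 1}" and ?A = "{0..<m}"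
  have g: "graph ?V ?E" by (rule EP_graph)
  have finV: "finite ?V" by simp
  have AV: "?A \<subseteq> ?V" by auto
  have TA: "?T \<subseteq> ?A" using m2 by auto
  have Tne: "?T \<noteq> {}" by simp
  obtain ET where st: "steiner_tree ?V ?E ?T ?A ET"
    using steiner_exists[OF g AV EP_conn TA Tne] by blast
  have inst: "st_instance ?V ?E ?T" unfolding st_instance_def using g TA AV Tne st by blast
  have cT: "card ?T = 2" using m2 by simp
  have mV: "m \<in> ?V" using m2 by simp
  have mdge: "m * m \<le> maxdeg ?V ?E"
  proof -
    have "m * m \<le> deg ?E m" using EP_deg_H[of m m] m2 by simp
    also have "\<dots> \<le> maxdeg ?V ?E" unfolding maxdeg_def using finV mV by (intro Max_ge) auto
    finally show ?thesis .
  qed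
  have mdle: "maxdeg ?V ?E \<le> m * m + m"
    unfolding maxdeg_def using finV mV m2 EP_deg_le[of m] by (subst Max_le_iff) auto
  have q: "qstar ?V ?E ?T \<le> 2 * m"
  proof -
    have "(\<Union>u\<in>?A. cnbhd ?E u) \<subseteq> {0..<2 * m}"
    proof (rule UN_least)
      fix u assume "u \<in> ?A"
      then have "\<not> (m \<le> u \<and> u < 2 * m)" "u < 2 * m" by auto
      then show "cnbhd ?E u \<subseteq> {0..<2 * m}" unfolding cnbhd_def using EP_nbrs_notH[of m u] by auto
    qed
    then have "Cost ?E ?A \<le> card {0..<2 * m}" unfolding Cost_def by (intro card_mono) auto
    then show ?thesis using qstar_le[OF g st] by simp
  qed
  have d: "m * m \<le> DegCoststar ?V ?E ?T"
  proof (rule dstar_ge[OF g st])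
    fix VT ET' assume st': "steiner_tree ?V ?E ?T VT ET'"
    have VTV: "VT \<subseteq> ?V" and ETE: "ET' \<subseteq> ?E" and TVT: "?T \<subseteq> VT" and tr: "is_tree VT ET'"
      using st' by (auto simp: steiner_tree_def)
    have finVT: "finite VT" using VTV finite_subset by blast
    show "m * m \<le> DegCost ?E VT"
    proof (cases "\<exists>h\<in>VT. m \<le> h \<and> h < 2 * m")
      case True
      then obtain h where h: "h \<in> VT" "m \<le> h" "h < 2 * m" by blast
      have "m * m \<le> deg ?E h" using EP_deg_H h by blast
      also have "\<dots> \<le> DegCost ?E VT" unfolding DegCost_def by (rule member_le_sum[OF h(1)]) (simp_all add: finVT)
      finally show ?thesis .
    next
      case False
      have AVT: "?A \<subseteq> VT"
      proof
        fix j assume "j \<in> ?A"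
        then have jm: "j < m" by simp
        show "j \<in> VT"
        proof (rule ccontr)
          assume jn: "j \<notin> VT"
          let ?R = "{(x, y). {x, y} \<in> ET'}"
          have "0 \<in> VT" "m - 1 \<in> VT" using TVT by auto
          then have path: "(0, m - 1) \<in> ?R\<^sup>*" using tr by (simp add: is_tree_def)
          have j0: "0 < j" using \<open>0 \<in> VT\<close> jn by (cases j) auto
          have edges: "\<forall>e\<in>ET'. e \<subseteq> VT" using tr by (simp add: is_tree_def)
          have "y < j" if "(0, y) \<in> ?R\<^sup>*" for y
            using that
          proof (induction rule: rtrancl_induct)
            case base then show ?case using j0 by simp
          next
            case (step x y)
            have xy: "{x, y} \<in> ET'" using step.hyps(2) by simp
            then have yVT: "y \<in> VT" using edges by auto
            have "{x, y} \<in> ?E" using xy ETE by auto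
            then have pp: "PP m x y \<or> PP m y x" using EP_iff by blast
            have yH: "\<not> (m \<le> y \<and> y < 2 * m)" using False yVT by blast
            have yj: "y \<noteq> j" using yVT jn by blast
            show ?case using pp step.IH jm yH yj unfolding PP_def by auto
          qed
          from this[OF path] jm show False by simp
        qed
      qed
      have "m * m = (\<Sum>a\<in>?A. m)" by simp
      also have "\<dots> \<le> (\<Sum>a\<in>?A. deg ?E a)" using EP_deg_A by (intro sum_mono) auto
      also have "\<dots> \<le> DegCost ?E VT" unfolding DegCost_def using finVT AVT by (intro sum_mono2) auto
      finally show ?thesis .
    qed
  qed
  have sq: "sqrt (real (maxdeg ?V ?E)) \<le> real m + 1"
  proof -
    have "maxdeg ?V ?E \<le> (m + 1) * (m + 1)" using mdle by (simp add: algebra_simps)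
    then have "real (maxdeg ?V ?E) \<le> (real m + 1) * (real m + 1)" by (metis of_nat_le_iff of_nat_mult of_nat_Suc Suc_eq_plus1 add.commute)
    then have "sqrt (real (maxdeg ?V ?E)) \<le> sqrt ((real m + 1) * (real m + 1))" by (rule real_sqrt_le_mono)
    also have "\<dots> = real m + 1" by simp
    finally show ?thesis .
  qed
  have "1/8 * (sqrt (real (maxdeg ?V ?E)) + real (card ?T)) * real (qstar ?V ?E ?T)
      \<le> 1/8 * (real m + 3) * (2 * real m)"
  proof (rule mult_mono)
    show "1/8 * (sqrt (real (maxdeg ?V ?E)) + real (card ?T)) \<le> 1/8 * (real m + 3)"
      using sq cT by simp
    show "real (qstar ?V ?E ?T) \<le> 2 * real m" using q by simp
  qed auto
  also have "\<dots> \<le> real m * real m"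
  proof -
    have "real m + 3 \<le> 4 * real m" using m2 by simp
    then have "real m * (real m + 3) \<le> real m * (4 * real m)" by (intro mult_left_mono) auto
    then show ?thesis by (simp add: algebra_simps)
  qed
  also have "\<dots> \<le> real (DegCoststar ?V ?E ?T)" using d by (metis of_nat_le_iff of_nat_mult)
  finally have ineq: "1/8 * (sqrt (real (maxdeg ?V ?E)) + real (card ?T)) * real (qstar ?V ?E ?T)
      \<le> real (DegCoststar ?V ?E ?T)" .
  show ?thesis using inst cT mdge ineq by simp
qed


theorem lemma1:
  shows "(\<exists>C::real. \<forall>(V::nat set) E T. st_instance V E T \<longrightarrow>
            real (DegCoststar V E T)
              \<le> C * (sqrt (real (maxdeg V E)) + real (card T)) * real (qstar V E T))
       \<and> (\<exists>c::real. c > 0 \<and>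
            (\<exists>k0::nat. \<forall>D::nat. \<exists>(V::nat set) E T. st_instance V E T \<and> card T \<le> k0 \<and> maxdeg V E \<ge> D \<and>
               real (DegCoststar V E T)
                 \<ge> c * (sqrt (real (maxdeg V E)) + real (card T)) * real (qstar V E T))
          \<and> (\<forall>K::nat. \<exists>(V::nat set) E T. st_instance V E T \<and> card T \<ge> K \<and>
               real (DegCoststar V E T)
                 \<ge> c * (sqrt (real (maxdeg V E)) + real (card T)) * real (qstar V E T)))"
proof (intro conjI)
  show "\<exists>C::real. \<forall>(V::nat set) E T. st_instance V E T \<longrightarrow>
            real (DegCoststar V E T)
              \<le> C * (sqrt (real (maxdeg V E)) + real (card T)) * real (qstar V E T)"
    using upper by blast
  show "\<exists>c::real. c > 0 \<and>
            (\<exists>k0::nat. \<forall>D::nat. \<exists>(V::nat set) E T. st_instance V E T \<and> card T \<le> k0 \<and> maxdeg V E \<ge> D \<and>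
               real (DegCoststar V E T)
                 \<ge> c * (sqrt (real (maxdeg V E)) + real (card T)) * real (qstar V E T))
          \<and> (\<forall>K::nat. \<exists>(V::nat set) E T. st_instance V E T \<and> card T \<ge> K \<and>
               real (DegCoststar V E T)
                 \<ge> c * (sqrt (real (maxdeg V E)) + real (card T)) * real (qstar V E T))"
  proof (intro exI[of _ "1/8"] conjI)
    show "(0::real) < 1/8" by simp
    show "\<exists>k0::nat. \<forall>D::nat. \<exists>(V::nat set) E T. st_instance V E T \<and> card T \<le> k0 \<and> maxdeg V E \<ge> D \<and>
               real (DegCoststar V E T)
                 \<ge> 1/8 * (sqrt (real (maxdeg V E)) + real (card T)) * real (qstar V E T)"
    proof (intro exI[of _ 2] allI)
      fix D :: nat
      define m where "m = D + 2"
      have m2: "m \<ge> 2" unfolding m_def by simp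
      have Dm: "D \<le> m * m" unfolding m_def by (simp add: le_square trans_le_add1 le_trans[OF _ le_square])
      from instP[OF m2] Dm show "\<exists>(V::nat set) E T. st_instance V E T \<and> card T \<le> 2 \<and> maxdeg V E \<ge> D \<and>
               real (DegCoststar V E T)
                 \<ge> 1/8 * (sqrt (real (maxdeg V E)) + real (card T)) * real (qstar V E T)"
        by (meson le_trans)
    qed
    show "\<forall>K::nat. \<exists>(V::nat set) E T. st_instance V E T \<and> card T \<ge> K \<and>
               real (DegCoststar V E T)
                 \<ge> 1/8 * (sqrt (real (maxdeg V E)) + real (card T)) * real (qstar V E T)"
    proof
      fix K :: nat
      have n2: "K + 2 \<ge> 2" by simp
      from instK[OF n2] show "\<exists>(V::nat set) E T. st_instance V E T \<and> card T \<ge> K \<and>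
               real (DegCoststar V E T)
                 \<ge> 1/8 * (sqrt (real (maxdeg V E)) + real (card T)) * real (qstar V E T)"
        by (meson le_add1 le_trans)
    qed
  qed
qed

end
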